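(* Let $G$ be a finite nilpotent group whose order is divisible by at least two distinct primes. Then the cyclic graph $\Delta(G)$ is connected and $\mathrm{diam}(\Delta(G))\le 3$.
   Context: For a finite group $G$, the cyclic graph $\Delta(G)$ has vertex set $G^{\#}=G\setminus\{1\}$, and distinct vertices $x,y$ are adjacent if and only if the subgroup $\langle x,y\rangle$ is cyclic. The diameter is the maximum graph distance between two vertices. *)

theory Defs
  imports "HOL-Algebra.Algebra" "HOL-Library.Extended_Nat" "HOL-Computational_Algebra.Primes"
begin

definition commutator_set :: "('a, 'b) monoid_scheme \<Rightarrow> 'a set \<Rightarrow> 'a set \<Rightarrow> 'a set" where
  "commutator_set G H K =
     {h \<otimes>\<^bsub>G\<^esub> k \<otimes>\<^bsub>G\<^esub> inv\<^bsub>G\<^esub> h \<otimes>\<^bsub>G\<^esub> inv\<^bsub>G\<^esub> k | h k. h \<in> H \<and> k \<in> K}"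

fun lower_central :: "('a, 'b) monoid_scheme \<Rightarrow> nat \<Rightarrow> 'a set" where
  "lower_central G 0 = carrier G"
| "lower_central G (Suc n) = generate G (commutator_set G (carrier G) (lower_central G n))"

definition nilpotent_group :: "('a, 'b) monoid_scheme \<Rightarrow> bool" where
  "nilpotent_group G \<longleftrightarrow> group G \<and> (\<exists>n. lower_central G n = {\<one>\<^bsub>G\<^esub>})"

definition cyc_vertices :: "('a, 'b) monoid_scheme \<Rightarrow> 'a set" where
  "cyc_vertices G = carrier G - {\<one>\<^bsub>G\<^esub>}"

definition cyc_adj :: "('a, 'b) monoid_scheme \<Rightarrow> 'a \<Rightarrow> 'a \<Rightarrow> bool" where
  "cyc_adj G x y \<longleftrightarrow> x \<in> cyc_vertices G \<and> y \<in> cyc_vertices G \<and> x \<noteq> y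
      \<and> cyclic_group (subgroup_generated G {x, y})"

definition cyc_walk :: "('a, 'b) monoid_scheme \<Rightarrow> 'a list \<Rightarrow> bool" where
  "cyc_walk G xs \<longleftrightarrow> xs \<noteq> [] \<and> set xs \<subseteq> cyc_vertices G
      \<and> (\<forall>i. Suc i < length xs \<longrightarrow> cyc_adj G (xs ! i) (xs ! Suc i))"

(* graph distance (infinity if no path) *)
definition cyc_dist :: "('a, 'b) monoid_scheme \<Rightarrow> 'a \<Rightarrow> 'a \<Rightarrow> enat" where
  "cyc_dist G x y = Inf {enat (length xs - 1) | xs. cyc_walk G xs \<and> hd xs = x \<and> last xs = y}"

definition cyc_connected :: "('a, 'b) monoid_scheme \<Rightarrow> bool" where
  "cyc_connected G \<longleftrightarrow> (\<forall>x\<in>cyc_vertices G. \<forall>y\<in>cyc_vertices G.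
      \<exists>xs. cyc_walk G xs \<and> hd xs = x \<and> last xs = y)"

definition cyc_diam :: "('a, 'b) monoid_scheme \<Rightarrow> enat" where
  "cyc_diam G = Sup {cyc_dist G x y | x y. x \<in> cyc_vertices G \<and> y \<in> cyc_vertices G}"

end

theory Submission
  imports Defs
begin

context group
begin

definition cm :: "'a \<Rightarrow> 'a \<Rightarrow> 'a" where
  "cm x y = x \<otimes> y \<otimes> inv x \<otimes> inv y"

lemma cm_closed[simp]: "x \<in> carrier G \<Longrightarrow> y \<in> carrier G \<Longrightarrow> cm x y \<in> carrier G"
  by (simp add: cm_def)

lemma lc_sub: "lower_central G n \<subseteq> carrier G"
proof (induction n)
  case 0 then show ?case by simp
next
  case (Suc n)
  have "commutator_set G (carrier G) (lower_central G n) \<subseteq> carrier G"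
    using Suc by (auto simp: commutator_set_def)
  then show ?case by (simp add: generate_incl)
qed

lemma lc_subgroup: "subgroup (lower_central G n) G"
proof (cases n)
  case 0 then show ?thesis by (simp add: subgroup_self)
next
  case (Suc k)
  have "commutator_set G (carrier G) (lower_central G k) \<subseteq> carrier G"
    using lc_sub[of k] by (auto simp: commutator_set_def)
  then show ?thesis using Suc by (simp add: generate_is_subgroup)
qed

lemma lc_comm: "g \<in> carrier G \<Longrightarrow> h \<in> lower_central G n \<Longrightarrow> cm g h \<in> lower_central G (Suc n)"
  by (auto simp: cm_def commutator_set_def intro!: generate.incl)

lemma lc_mono: "lower_central G (Suc n) \<subseteq> lower_central G n"
proof (induction n)
  case 0 then show ?case using lc_sub[of 1] by simp
next
  case (Suc n)
  have "commutator_set G (carrier G) (lower_central G (Suc n)) \<subseteq> commutator_set G (carrier G) (lower_central G n)"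
    using Suc unfolding commutator_set_def by blast
  then show ?case by (simp only: lower_central.simps) (rule mono_generate)
qed

lemma lc_normal:
  assumes g: "g \<in> carrier G" and x: "x \<in> lower_central G n"
  shows "g \<otimes> x \<otimes> inv g \<in> lower_central G n"
proof -
  have xc: "x \<in> carrier G" using x lc_sub by blast
  have "cm g x \<in> lower_central G n" using lc_comm[OF g x] lc_mono by blast
  moreover have "g \<otimes> x \<otimes> inv g = cm g x \<otimes> x"
    using g xc by (simp add: cm_def m_assoc)
  ultimately show ?thesis using x subgroup.m_closed[OF lc_subgroup] by metis
qed

lemma canc1[simp]: "x \<in> carrier G \<Longrightarrow> y \<in> carrier G \<Longrightarrow> x \<otimes> (inv x \<otimes> y) = y"
  by (simp flip: m_assoc)
lemma canc2[simp]: "x \<in> carrier G \<Longrightarrow> y \<in> carrier G \<Longrightarrow> inv x \<otimes> (x \<otimes> y) = y"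
  by (simp flip: m_assoc)

lemma cm_pow_step:
  assumes a: "a \<in> carrier G" and b: "b \<in> carrier G" and c: "cm a b \<in> lower_central G k"
  shows "cm a (b [^] (j::nat)) \<otimes> inv (cm a b [^] j) \<in> lower_central G (Suc k)"
proof (induction j)
  case 0
  then show ?case using a by (simp add: cm_def generate.one)
next
  case (Suc j)
  define B where "B = b [^] j"
  define c where "c = cm a b"
  define C where "C = c [^] j"
  have Bc: "B \<in> carrier G" and cc: "c \<in> carrier G" and Cc: "C \<in> carrier G"
    using a b by (auto simp: B_def c_def C_def)
  have eq: "cm a (B \<otimes> b) \<otimes> inv (C \<otimes> c) = (cm a B \<otimes> inv C) \<otimes> (C \<otimes> cm B c \<otimes> inv C)"
    using a b Bc Cc by (simp add: c_def cm_def m_assoc inv_mult_group)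
  have "cm B c \<in> lower_central G (Suc k)" using lc_comm[OF Bc] c unfolding c_def by blast
  then have "C \<otimes> cm B c \<otimes> inv C \<in> lower_central G (Suc k)"
    using lc_normal Cc by blast
  moreover have "cm a B \<otimes> inv C \<in> lower_central G (Suc k)" using Suc by (simp add: B_def C_def c_def)
  ultimately have "cm a (B \<otimes> b) \<otimes> inv (C \<otimes> c) \<in> lower_central G (Suc k)"
    unfolding eq using subgroup.m_closed[OF lc_subgroup] by blast
  then show ?case by (simp add: B_def C_def c_def)
qed

lemma sub_pow_closed:
  assumes "subgroup H G" "x \<in> H" shows "x [^] (n::nat) \<in> H"
proof (induction n)
  case 0 then show ?case using assms by (simp add: subgroup.one_closed)
next
  case (Suc n) then show ?case using assms by (simp add: subgroup.m_closed)
qed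

lemma coprime_pow_mem:
  assumes H: "subgroup H G" and c: "c \<in> carrier G" and m: "c [^] m \<in> H" and n: "c [^] n \<in> H"
    and cop: "coprime m (n::nat)"
  shows "c \<in> H"
proof (cases "m = 0")
  case True
  then have "n = 1" using cop by simp
  then show ?thesis using n c by simp
next
  case False
  then obtain x y where xy: "m * x = n * y + gcd m n" using bezout_nat by blast
  then have xy1: "m * x = n * y + 1" using cop by simp
  have "c [^] (m * x) = c [^] (n * y) \<otimes> c"
    using c by (simp add: xy1 nat_pow_mult[symmetric])
  then have "c = inv (c [^] (n * y)) \<otimes> c [^] (m * x)"
    using c by simp
  moreover have "c [^] (m * x) \<in> H" "c [^] (n * y) \<in> H"
    using sub_pow_closed[OF H m] sub_pow_closed[OF H n] c by (auto simp: nat_pow_pow)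
  ultimately show ?thesis using H by (metis subgroup.m_closed subgroup.m_inv_closed)
qed

lemma cm_swap: "a \<in> carrier G \<Longrightarrow> b \<in> carrier G \<Longrightarrow> cm b a = inv (cm a b)"
  by (simp add: cm_def inv_mult_group m_assoc)

lemma comm_in_lc:
  assumes fin: "finite (carrier G)"
  shows "a \<in> carrier G \<Longrightarrow> b \<in> carrier G \<Longrightarrow> coprime (ord a) (ord b) \<Longrightarrow> cm a b \<in> lower_central G k"
proof (induction k arbitrary: a b)
  case 0 then show ?case by simp
next
  case (Suc k)
  have c1: "cm a b \<in> lower_central G k" using Suc by blast
  have c2: "cm b a \<in> lower_central G k" using Suc by (simp add: coprime_commute)
  have "cm a (b [^] ord b) \<otimes> inv (cm a b [^] ord b) \<in> lower_central G (Suc k)"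
    using cm_pow_step[OF Suc.prems(1,2) c1] .
  then have "inv (cm a b [^] ord b) \<in> lower_central G (Suc k)"
    using Suc.prems by (simp add: cm_def)
  then have h1: "cm a b [^] ord b \<in> lower_central G (Suc k)"
    using Suc.prems subgroup.m_inv_closed[OF lc_subgroup] by fastforce
  have "cm b (a [^] ord a) \<otimes> inv (cm b a [^] ord a) \<in> lower_central G (Suc k)"
    using cm_pow_step[OF Suc.prems(2,1) c2] .
  then have "inv (cm b a [^] ord a) \<in> lower_central G (Suc k)"
    using Suc.prems by (simp add: cm_def)
  then have h2: "cm a b [^] ord a \<in> lower_central G (Suc k)"
    using Suc.prems subgroup.m_inv_closed[OF lc_subgroup]
    by (metis cm_swap cm_closed nat_pow_inv inv_inv nat_pow_closed)
  show ?case
    using coprime_pow_mem[OF lc_subgroup _ h1 h2] Suc.prems by (simp add: coprime_commute)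
qed

lemma nilp_commute:
  assumes fin: "finite (carrier G)" and nil: "nilpotent_group G"
    and a: "a \<in> carrier G" and b: "b \<in> carrier G" and cop: "coprime (ord a) (ord b)"
  shows "a \<otimes> b = b \<otimes> a"
proof -
  obtain n where n: "lower_central G n = {\<one>}" using nil unfolding nilpotent_group_def by blast
  have "cm a b = \<one>" using comm_in_lc[OF fin a b cop, of n] n by simp
  moreover have "a \<otimes> b = cm a b \<otimes> (b \<otimes> a)" using a b by (simp add: cm_def m_assoc)
  ultimately show ?thesis using a b by simp
qed

lemma gen_eq_cyclic:
  assumes "x \<in> carrier G" "y \<in> carrier G" "g \<in> carrier G"
    and "generate G {x, y} = generate G {g}"
  shows "cyclic_group (subgroup_generated G {x, y})"
proof -
  have "subgroup_generated G {x, y} = subgroup_generated G {g}"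
    using assms unfolding subgroup_generated_def
    by (simp add: Int_absorb1)
  then show ?thesis using cyclic_group_generated by simp
qed

lemma cyc_pow:
  assumes x: "x \<in> carrier G"
  shows "cyclic_group (subgroup_generated G {x, x [^] (k::nat)})"
proof -
  have S: "subgroup (generate G {x}) G" using x by (simp add: generate_is_subgroup)
  have xi: "x \<in> generate G {x}" by (simp add: generate.incl)
  have "{x, x [^] k} \<subseteq> generate G {x}" using sub_pow_closed[OF S xi] xi by simp
  then have "generate G {x, x [^] k} \<subseteq> generate G {x}"
    using generate_subgroup_incl[OF _ S] by simp
  moreover have "generate G {x} \<subseteq> generate G {x, x [^] k}" by (rule mono_generate) blast
  ultimately show ?thesis using gen_eq_cyclic[OF x _ x] x by blast
qed

lemma cyc_coprime:
  assumes a: "a \<in> carrier G" and b: "b \<in> carrier G" and ab: "a \<otimes> b = b \<otimes> a"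
    and cop: "coprime (ord a) (ord b)"
  shows "cyclic_group (subgroup_generated G {a, b})"
proof -
  define g where "g = a \<otimes> b"
  have gc: "g \<in> carrier G" using a b by (simp add: g_def)
  have S: "subgroup (generate G {g}) G" using gc by (simp add: generate_is_subgroup)
  have gi: "g \<in> generate G {g}" by (simp add: generate.incl)
  have "g [^] ord b = a [^] ord b"
    using pow_mult_distrib[OF ab a b] a b by (simp add: g_def)
  then have h1: "a [^] ord b \<in> generate G {g}" using sub_pow_closed[OF S gi, of "ord b"] by simp
  have h2: "a [^] ord a \<in> generate G {g}" using a subgroup.one_closed[OF S] by simp
  have ai: "a \<in> generate G {g}"
    using coprime_pow_mem[OF S a h2 h1 cop] .
  have "b = inv a \<otimes> g" using a b by (simp add: g_def)
  then have bi: "b \<in> generate G {g}" using ai gi S by (metis subgroup.m_closed subgroup.m_inv_closed)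
  have "{a, b} \<subseteq> generate G {g}" using ai bi by simp
  then have i1: "generate G {a, b} \<subseteq> generate G {g}"
    using generate_subgroup_incl[OF _ S] by simp
  have gin: "g \<in> generate G {a, b}"
    unfolding g_def by (rule generate.eng) (auto intro: generate.incl)
  have S2: "subgroup (generate G {a, b}) G" using a b by (simp add: generate_is_subgroup)
  have i2: "generate G {g} \<subseteq> generate G {a, b}"
    using generate_subgroup_incl[OF _ S2, of "{g}"] gin by simp
  show ?thesis using gen_eq_cyclic[OF a b gc] i1 i2 by blast
qed

lemma parts:
  assumes fin: "finite (carrier G)" and x: "x \<in> carrier G" and r: "Factorial_Ring.prime r" and rd: "r dvd ord x"
  shows "\<exists>e m. ord x = r ^ e * m \<and> \<not> r dvd m \<and> ord (x [^] m) = r ^ e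
           \<and> ord (x [^] (r ^ e)) = m \<and> e \<ge> 1"
proof -
  have o0: "ord x \<noteq> 0" using ord_ge_1[OF fin x] by simp
  have nu: "\<not> is_unit r" using r not_prime_unit by blast
  define e where "e = multiplicity r (ord x)"
  obtain m where m: "ord x = r ^ e * m" "\<not> r dvd m"
    using multiplicity_decompose'[OF o0 nu] unfolding e_def by blast
  have m0: "m \<noteq> 0" using o0 m by auto
  have r0: "r ^ e \<noteq> 0" using r by (simp add: prime_gt_0_nat)
  have "ord (x [^] m) = ord x div m" using ord_pow[OF x _ m0] m by simp
  then have o1: "ord (x [^] m) = r ^ e" using m m0 by simp
  have "ord (x [^] (r ^ e)) = ord x div r ^ e" using ord_pow[OF x _ r0] m by simp
  then have o2: "ord (x [^] (r ^ e)) = m" using m r0 by (metis nonzero_mult_div_cancel_left)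
  have "e \<ge> 1"
  proof (rule ccontr)
    assume "\<not> e \<ge> 1" then have "e = 0" by simp
    then show False using m rd by simp
  qed
  then show ?thesis using m o1 o2 by blast
qed

lemma sylow_elem:
  assumes fin: "finite (carrier G)" and s: "Factorial_Ring.prime s" and sd: "s dvd order G"
  shows "\<exists>y\<in>carrier G. y \<noteq> \<one> \<and> (\<exists>a. ord y dvd s ^ a)"
proof -
  have o0: "order G \<noteq> 0" using fin by (simp add: order_gt_0_iff_finite[symmetric])
  have nu: "\<not> is_unit s" using s not_prime_unit by blast
  define a where "a = multiplicity s (order G)"
  obtain m where m: "order G = s ^ a * m" "\<not> s dvd m"
    using multiplicity_decompose'[OF o0 nu] unfolding a_def by blast
  obtain H where H: "subgroup H G" "card H = s ^ a"
    using sylow_thm[OF s is_group m(1) fin] by blast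
  have "a \<noteq> 0" using m sd by (metis mult_1 power_0)
  then have "s ^ 1 \<le> s ^ a" using s by (intro power_increasing) (auto simp: prime_gt_0_nat Suc_leI)
  then have "s ^ a \<ge> s" by simp
  moreover have "s \<ge> 2" using s by (rule prime_ge_2_nat)
  ultimately have c2: "card H \<ge> 2" using H(2) by linarith
  have "\<not> H \<subseteq> {\<one>}"
  proof
    assume "H \<subseteq> {\<one>}" then have "card H \<le> 1" using card_mono[of "{\<one>}" H] by simp
    then show False using c2 by simp
  qed
  then obtain y where y: "y \<in> H" "y \<noteq> \<one>" by blast
  have gH: "group (G\<lparr>carrier := H\<rparr>)" using subgroup.subgroup_is_group[OF H(1) is_group] .
  have yH: "y \<in> carrier (G\<lparr>carrier := H\<rparr>)" using y by simp
  have oH: "order (G\<lparr>carrier := H\<rparr>) = card H" by (simp add: order_def)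
  have "y [^] card H = y [^]\<^bsub>G\<lparr>carrier := H\<rparr>\<^esub> card H" by (rule nat_pow_consistent)
  also have "\<dots> = y [^]\<^bsub>G\<lparr>carrier := H\<rparr>\<^esub> order (G\<lparr>carrier := H\<rparr>)" by (simp only: oH)
  also have "\<dots> = \<one>\<^bsub>G\<lparr>carrier := H\<rparr>\<^esub>"
    by (rule group.pow_order_eq_1[OF gH yH])
  also have "\<dots> = \<one>" by simp
  finally have "y [^] card H = \<one>" .
  moreover have yc: "y \<in> carrier G" by (rule subgroup.mem_carrier[OF H(1) y(1)])
  ultimately have "ord y dvd card H" using pow_eq_id[OF yc] by blast
  then have "ord y dvd s ^ a" using H(2) by (simp only:)
  then show ?thesis using y(2) yc by blast
qed

lemma cop_pp:
  assumes "Factorial_Ring.prime (r::nat)" "\<not> r dvd k"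
  shows "coprime (r ^ e) k" "coprime k (r ^ e)"
  using prime_imp_coprime[OF assms] by (auto simp: coprime_commute)

definition PP where
  "PP u v \<longleftrightarrow> u \<in> carrier G \<and> v \<in> carrier G \<and> u \<noteq> \<one> \<and> v \<noteq> \<one>
     \<and> cyclic_group (subgroup_generated G {u, v})"

definition RR where
  "RR xs \<longleftrightarrow> xs \<noteq> [] \<and> set xs \<subseteq> cyc_vertices G
     \<and> successively (\<lambda>u v. u = v \<or> cyc_adj G u v) xs \<and> length xs \<le> 4"

lemma PP_sym: "PP u v \<Longrightarrow> PP v u"
  by (simp add: PP_def insert_commute)

lemma PP_R: "PP u v \<Longrightarrow> u = v \<or> cyc_adj G u v"
  by (auto simp: PP_def cyc_adj_def cyc_vertices_def)

lemma PP_V: "PP u v \<Longrightarrow> u \<in> cyc_vertices G \<and> v \<in> cyc_vertices G"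
  by (auto simp: PP_def cyc_vertices_def)

lemma path2: "PP x y \<Longrightarrow> PP y z \<Longrightarrow> \<exists>xs. RR xs \<and> hd xs = x \<and> last xs = z"
  apply (rule exI[of _ "[x, y, z]"])
  using PP_R[of x y] PP_R[of y z] PP_V[of x y] PP_V[of y z] by (auto simp: RR_def)

lemma path3: "PP x y \<Longrightarrow> PP y w \<Longrightarrow> PP w z \<Longrightarrow> \<exists>xs. RR xs \<and> hd xs = x \<and> last xs = z"
  apply (rule exI[of _ "[x, y, w, z]"])
  using PP_R[of x y] PP_R[of y w] PP_R[of w z] PP_V[of x y] PP_V[of y w] PP_V[of w z]
  by (auto simp: RR_def)

lemma reach:
  assumes fin: "finite (carrier G)" and nil: "nilpotent_group G"
    and pq: "\<exists>p q :: nat. Factorial_Ring.prime p \<and> Factorial_Ring.prime q \<and> p \<noteq> q \<and> p dvd order G \<and> q dvd order G"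
    and xV: "x \<in> cyc_vertices G" and zV: "z \<in> cyc_vertices G"
  shows "\<exists>xs. RR xs \<and> hd xs = x \<and> last xs = z"
proof -
  have x: "x \<in> carrier G" "x \<noteq> \<one>" and z: "z \<in> carrier G" "z \<noteq> \<one>"
    using xV zV by (auto simp: cyc_vertices_def)
  have "ord x \<noteq> 1" using x ord_eq_1 by blast
  then obtain r where r: "Factorial_Ring.prime r" "r dvd ord x" using prime_factor_nat by blast
  have r2: "r \<ge> 2" using r(1) by (rule prime_ge_2_nat)
  obtain e m where em: "ord x = r ^ e * m" "\<not> r dvd m" "ord (x [^] m) = r ^ e"
     "ord (x [^] (r ^ e)) = m" "e \<ge> 1"
    using parts[OF fin x(1) r] by blast
  define x1 where "x1 = x [^] m"
  define x2 where "x2 = x [^] (r ^ e)"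
  have x1c: "x1 \<in> carrier G" and x2c: "x2 \<in> carrier G" using x by (auto simp: x1_def x2_def)
  have "r ^ 1 \<le> r ^ e" using em(5) r2 by (intro power_increasing) auto
  then have "r ^ e \<noteq> 1" using r2 by (simp only: power_one_right)
  then have x1n: "x1 \<noteq> \<one>" using em(3) ord_eq_1[OF x1c] by (simp add: x1_def)
  have Pxx1: "PP x x1" using x x1c x1n cyc_pow[OF x(1)] by (simp add: PP_def x1_def)
  show ?thesis
  proof (cases "r dvd ord z")
    case False
    have cop: "coprime (ord x1) (ord z)" using cop_pp[OF r(1) False] em(3) by (simp add: x1_def)
    have "x1 \<otimes> z = z \<otimes> x1" using nilp_commute[OF fin nil x1c z(1) cop] .
    then have "PP x1 z" using cyc_coprime[OF x1c z(1) _ cop] x1c x1n z by (simp add: PP_def)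
    then show ?thesis using path2[OF Pxx1] by blast
  next
    case True
    obtain f n where fn: "ord z = r ^ f * n" "\<not> r dvd n" "ord (z [^] n) = r ^ f"
       "ord (z [^] (r ^ f)) = n" "f \<ge> 1"
      using parts[OF fin z(1) r(1) True] by blast
    define z1 where "z1 = z [^] n"
    define z2 where "z2 = z [^] (r ^ f)"
    have z1c: "z1 \<in> carrier G" and z2c: "z2 \<in> carrier G" using z by (auto simp: z1_def z2_def)
    have "r ^ 1 \<le> r ^ f" using fn(5) r2 by (intro power_increasing) auto
    then have "r ^ f \<noteq> 1" using r2 by (simp only: power_one_right)
    then have z1n: "z1 \<noteq> \<one>" using fn(3) ord_eq_1[OF z1c] by (simp add: z1_def)
    have Pzz1: "PP z z1" using z z1c z1n cyc_pow[OF z(1)] by (simp add: PP_def z1_def)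
    show ?thesis
    proof (cases "m = 1")
      case False
      then have x2n: "x2 \<noteq> \<one>" using em(4) ord_eq_1[OF x2c] by (simp add: x2_def)
      have Pxx2: "PP x x2" using x x2c x2n cyc_pow[OF x(1)] by (simp add: PP_def x2_def)
      have cop: "coprime (ord x2) (ord z1)" using cop_pp[OF r(1) em(2)] em(4) fn(3)
        by (simp add: x2_def z1_def)
      have "x2 \<otimes> z1 = z1 \<otimes> x2" using nilp_commute[OF fin nil x2c z1c cop] .
      then have "PP x2 z1" using cyc_coprime[OF x2c z1c _ cop] x2c x2n z1c z1n by (simp add: PP_def)
      then show ?thesis using path3[OF Pxx2 _ PP_sym[OF Pzz1]] by blast
    next
      case m1: True
      show ?thesis
      proof (cases "n = 1")
        case False
        then have z2n: "z2 \<noteq> \<one>" using fn(4) ord_eq_1[OF z2c] by (simp add: z2_def)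
        have Pzz2: "PP z z2" using z z2c z2n cyc_pow[OF z(1)] by (simp add: PP_def z2_def)
        have cop: "coprime (ord x1) (ord z2)" using cop_pp[OF r(1) fn(2)] em(3) fn(4)
          by (simp add: x1_def z2_def)
        have "x1 \<otimes> z2 = z2 \<otimes> x1" using nilp_commute[OF fin nil x1c z2c cop] .
        then have "PP x1 z2" using cyc_coprime[OF x1c z2c _ cop] x1c x1n z2c z2n by (simp add: PP_def)
        then show ?thesis using path3[OF Pxx1 _ PP_sym[OF Pzz2]] by blast
      next
        case n1: True
        obtain p q :: nat where pq': "Factorial_Ring.prime p" "Factorial_Ring.prime q" "p \<noteq> q"
          "p dvd order G" "q dvd order G" using pq by blast
        obtain s where s: "Factorial_Ring.prime s" "s dvd order G" "s \<noteq> r"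
          using pq' by metis
        obtain y a where y: "y \<in> carrier G" "y \<noteq> \<one>" "ord y dvd s ^ a"
          using sylow_elem[OF fin s(1,2)] by blast
        have nr: "\<not> r dvd ord y"
        proof
          assume "r dvd ord y"
          then have "r dvd s ^ a" using y(3) by (rule dvd_trans)
          then have "r dvd s" using prime_dvd_power r(1) by blast
          then show False using primes_dvd_imp_eq[OF r(1) s(1)] s(3) by blast
        qed
        have ox: "ord x = r ^ e" using em(1) m1 by simp
        have oz: "ord z = r ^ f" using fn(1) n1 by simp
        have c1: "coprime (ord x) (ord y)" using cop_pp[OF r(1) nr] ox by simp
        have c2: "coprime (ord y) (ord z)" using cop_pp[OF r(1) nr] oz by simp
        have "x \<otimes> y = y \<otimes> x" using nilp_commute[OF fin nil x(1) y(1) c1] .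
        then have P1: "PP x y" using cyc_coprime[OF x(1) y(1) _ c1] x y by (simp add: PP_def)
        have "y \<otimes> z = z \<otimes> y" using nilp_commute[OF fin nil y(1) z(1) c2] .
        then have P2: "PP y z" using cyc_coprime[OF y(1) z(1) _ c2] z y by (simp add: PP_def)
        show ?thesis using path2[OF P1 P2] .
      qed
    qed
  qed
qed

end

lemma walk_iff: "cyc_walk G ys \<longleftrightarrow> ys \<noteq> [] \<and> set ys \<subseteq> cyc_vertices G \<and> successively (cyc_adj G) ys"
  by (simp add: cyc_walk_def successively_conv_nth)

lemma compress:
  "xs \<noteq> [] \<Longrightarrow> set xs \<subseteq> cyc_vertices G \<Longrightarrow> successively (\<lambda>u v. u = v \<or> cyc_adj G u v) xs
   \<Longrightarrow> \<exists>ys. cyc_walk G ys \<and> hd ys = hd xs \<and> last ys = last xs \<and> length ys \<le> length xs"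
proof (induction xs)
  case Nil then show ?case by simp
next
  case (Cons x xs)
  show ?case
  proof (cases "xs = []")
    case True
    then show ?thesis using Cons.prems
      by (intro exI[of _ "[x]"]) (auto simp: cyc_walk_def)
  next
    case False
    have s: "successively (\<lambda>u v. u = v \<or> cyc_adj G u v) xs"
      using Cons.prems(3) False by (simp add: successively_Cons)
    have hx: "x = hd xs \<or> cyc_adj G x (hd xs)"
      using Cons.prems(3) False by (simp add: successively_Cons)
    obtain ys where ys: "cyc_walk G ys" "hd ys = hd xs" "last ys = last xs" "length ys \<le> length xs"
      using Cons.IH[OF False _ s] Cons.prems(2) by auto
    show ?thesis
    proof (cases "x = hd xs")
      case True
      then show ?thesis using ys False by (intro exI[of _ ys]) auto
    next
      case xn: False
      have adj: "cyc_adj G x (hd ys)" using hx xn ys(2) by simp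
      have yne: "ys \<noteq> []" using ys(1) by (simp add: cyc_walk_def)
      have "cyc_walk G (x # ys)"
        using ys(1) adj Cons.prems(2) yne
        by (auto simp: walk_iff successively_Cons)
      then show ?thesis using ys False yne by (intro exI[of _ "x # ys"]) auto
    qed
  qed
qed

theorem lemma2p4:
  fixes G :: "('a, 'b) monoid_scheme"
  assumes "group G" and "finite (carrier G)" and "nilpotent_group G"
    and "\<exists>p q :: nat. Factorial_Ring.prime p \<and> Factorial_Ring.prime q \<and> p \<noteq> q \<and> p dvd order G \<and> q dvd order G"
  shows "cyc_connected G \<and> cyc_diam G \<le> 3"
proof -
  have key: "\<exists>ys. cyc_walk G ys \<and> hd ys = x \<and> last ys = z \<and> length ys \<le> 4"
    if xV: "x \<in> cyc_vertices G" and zV: "z \<in> cyc_vertices G" for x z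
  proof -
    obtain xs where xs: "group.RR G xs" "hd xs = x" "last xs = z"
      using group.reach[OF assms(1) assms(2) assms(3) assms(4) xV zV] by blast
    have xs': "xs \<noteq> []" "set xs \<subseteq> cyc_vertices G"
      "successively (\<lambda>u v. u = v \<or> cyc_adj G u v) xs" "length xs \<le> 4"
      using xs(1) by (simp_all add: group.RR_def[OF assms(1)])
    obtain ys where "cyc_walk G ys" "hd ys = hd xs" "last ys = last xs" "length ys \<le> length xs"
      using compress[OF xs'(1,2,3)] by blast
    then show ?thesis using xs xs'(4) by (intro exI[of _ ys]) auto
  qed
  have conn: "cyc_connected G" unfolding cyc_connected_def using key by blast
  have "cyc_dist G x z \<le> 3" if xV: "x \<in> cyc_vertices G" and zV: "z \<in> cyc_vertices G" for x z
  proof -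
    obtain ys where ys: "cyc_walk G ys" "hd ys = x" "last ys = z" "length ys \<le> 4"
      using key[OF xV zV] by blast
    have mem: "enat (length ys - 1) \<in> {enat (length xs - 1) | xs. cyc_walk G xs \<and> hd xs = x \<and> last xs = z}"
      using ys by blast
    have le: "enat (length ys - 1) \<le> 3"
      using ys(4) by (simp add: numeral_eq_enat)
    show ?thesis unfolding cyc_dist_def by (rule Inf_lower2[OF mem le])
  qed
  then have "cyc_diam G \<le> 3" unfolding cyc_diam_def by (auto intro!: Sup_least)
  then show ?thesis using conn by simp
qed

end
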